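(* Let $\Lambda\Subset\mathbb X$. For a selector $s$, let $\rho_0=\mathbf 1_{\{\varnothing\}}:\mathbf F\to\mathbb C$ and $\rho_{n+1}=K_\Lambda\rho_n$ for $n\in\mathbb N_0$. Then the sequence $(\rho_n)_{n\in\mathbb N_0}$ does not depend on the choice of the selector $s$, and $\rho_n(\varnothing)=1$ for every $n\in\mathbb N_0$.
   Context: $\mathbb X$ is a finite or countably infinite set, $X\Subset\mathbb X$ means finite subset, $\mathbf F$ is the set of finite subsets. Fix $z:\mathbb X\to\mathbb C$, $W:\mathbf F\to\mathbb C$. Conditional interaction: $W(X\mid B)=\prod_{C\subset B}W(X\cup C)$ if $X\cap B=\varnothing$, $W(X\mid B)=0$ if $X=\{y\}$ with $y\in B$, $W(X\mid B)=1$ otherwise. Boltzmann factor $\kappa(X\mid B)=\prod_{\varnothing\neq S\subset X}W(S\mid B)$, $\kappa(s\mid B)=\kappa(\{s\}\mid B)$. Kernel: $\gamma(s,N\mid B)=\sum_{M\subset N}(-1)^{|N\setminus M|}\kappa(s\mid B\cup M)$. A selector is a map $s:\mathbf F\setminus\{\varnothing\}\to\mathbb X$ with $s_X:=s(X)\in X$; put $X'_s=X\setminus\{s_X\}$. For $\rho:\mathbf F\to\mathbb C$, the Kirkwood--Salsburg operator is $(K_\Lambda\rho)(\varnothing)=\rho(\varnothing)$ and, for $X\neq\varnothing$, $(K_\Lambda\rho)(X)=\sum_{N\subset\Lambda\setminus X'_s}z(s_X)\gamma(s_X,N\mid X'_s)\rho(X'_s\cup N)$. *)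

theory Defs
  imports Complex_Main "HOL-Library.Countable"
begin

text \<open>The ground set X is the type 'x (finite or countable); finite subsets are sets with
  finite. Only values of functions on finite sets are meaningful.\<close>

definition Wc :: "('x set \<Rightarrow> complex) \<Rightarrow> 'x set \<Rightarrow> 'x set \<Rightarrow> complex" where
  "Wc W X B = (if X \<inter> B = {} then (\<Prod>C\<in>Pow B. W (X \<union> C))
               else if (\<exists>y. X = {y} \<and> y \<in> B) then 0 else 1)"

definition kappa :: "('x set \<Rightarrow> complex) \<Rightarrow> 'x set \<Rightarrow> 'x set \<Rightarrow> complex" where
  "kappa W X B = (\<Prod>S\<in>Pow X - {{}}. Wc W S B)"

definition gam :: "('x set \<Rightarrow> complex) \<Rightarrow> 'x \<Rightarrow> 'x set \<Rightarrow> 'x set \<Rightarrow> complex" where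
  "gam W s N B = (\<Sum>M\<in>Pow N. (-1) ^ card (N - M) * kappa W {s} (B \<union> M))"

definition selector :: "('x set \<Rightarrow> 'x) \<Rightarrow> bool" where
  "selector s \<longleftrightarrow> (\<forall>X. finite X \<and> X \<noteq> {} \<longrightarrow> s X \<in> X)"

definition KS :: "('x \<Rightarrow> complex) \<Rightarrow> ('x set \<Rightarrow> complex) \<Rightarrow> ('x set \<Rightarrow> 'x)
                  \<Rightarrow> 'x set \<Rightarrow> ('x set \<Rightarrow> complex) \<Rightarrow> ('x set \<Rightarrow> complex)" where
  "KS z W s \<Lambda> \<rho> X = (if X = {} then \<rho> {} else
     (let x = s X; X' = X - {x} in
      \<Sum>N\<in>Pow (\<Lambda> - X'). z x * gam W x N X' * \<rho> (X' \<union> N)))"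

definition rho_seq :: "('x \<Rightarrow> complex) \<Rightarrow> ('x set \<Rightarrow> complex) \<Rightarrow> ('x set \<Rightarrow> 'x)
                  \<Rightarrow> 'x set \<Rightarrow> nat \<Rightarrow> ('x set \<Rightarrow> complex)" where
  "rho_seq z W s \<Lambda> n = (KS z W s \<Lambda> ^^ n) (\<lambda>X. if X = {} then 1 else 0)"

end

theory Submission
  imports Defs
begin

lemma alt_pow: "finite T \<Longrightarrow> (\<Sum>D\<in>Pow T. (-1::complex) ^ card D) = (if T = {} then 1 else 0)"
proof (induction T rule: finite_induct)
  case empty then show ?case by simp
next
  case (insert a T)
  have inj: "inj_on (insert a) (Pow T)" using insert.hyps
    unfolding inj_on_def by (metis PowD insert_ident subsetD)
  have "(\<Sum>D\<in>Pow (insert a T). (-1::complex) ^ card D)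
     = (\<Sum>D\<in>Pow T. (-1::complex) ^ card D) + (\<Sum>D\<in>insert a ` Pow T. (-1::complex) ^ card D)"
    unfolding Pow_insert
    by (rule sum.union_disjoint) (use insert.hyps in auto)
  also have "(\<Sum>D\<in>insert a ` Pow T. (-1::complex) ^ card D) = (\<Sum>D\<in>Pow T. (-1::complex) ^ card (insert a D))"
    by (simp add: sum.reindex[OF inj])
  also have "\<dots> = (\<Sum>D\<in>Pow T. - ((-1::complex) ^ card D))"
  proof (rule sum.cong[OF refl])
    fix D assume "D \<in> Pow T"
    then have "a \<notin> D" "finite D" using insert.hyps finite_subset by auto
    then show "(-1::complex) ^ card (insert a D) = - ((-1::complex) ^ card D)" by simp
  qed
  finally show ?case by (simp add: sum_negf)
qed

lemma alt_interval:
  assumes "finite Q" "M \<subseteq> Q"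
  shows "(\<Sum>N\<in>{N. M \<subseteq> N \<and> N \<subseteq> Q}. (-1::complex) ^ card (N - M)) = (if M = Q then 1 else 0)"
proof -
  have eq: "{N. M \<subseteq> N \<and> N \<subseteq> Q} = (\<lambda>D. M \<union> D) ` Pow (Q - M)"
  proof
    show "{N. M \<subseteq> N \<and> N \<subseteq> Q} \<subseteq> (\<lambda>D. M \<union> D) ` Pow (Q - M)"
    proof
      fix N assume "N \<in> {N. M \<subseteq> N \<and> N \<subseteq> Q}"
      then have "N = M \<union> (N - M)" "N - M \<in> Pow (Q - M)" by auto
      then show "N \<in> (\<lambda>D. M \<union> D) ` Pow (Q - M)" by blast
    qed
  qed (use assms in auto)
  have inj: "inj_on (\<lambda>D. M \<union> D) (Pow (Q - M))"
    unfolding inj_on_def by blast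
  have "(\<Sum>N\<in>{N. M \<subseteq> N \<and> N \<subseteq> Q}. (-1::complex) ^ card (N - M))
      = (\<Sum>D\<in>Pow (Q - M). (-1::complex) ^ card ((M \<union> D) - M))"
    unfolding eq by (simp add: sum.reindex[OF inj])
  also have "\<dots> = (\<Sum>D\<in>Pow (Q - M). (-1::complex) ^ card D)"
      proof (rule sum.cong[OF refl])
    fix D assume "D \<in> Pow (Q - M)"
    then have "(M \<union> D) - M = D" by auto
    then show "(-1::complex) ^ card ((M \<union> D) - M) = (-1) ^ card D" by simp
  qed
  also have "\<dots> = (if M = Q then 1 else 0)"
    using assms by (simp add: alt_pow)
  finally show ?thesis .
qed

lemma mobius_key:
  fixes k F :: "'a set \<Rightarrow> complex"
  assumes L: "finite L"
  shows "(\<Sum>N\<in>Pow L. (\<Sum>M\<in>Pow N. (-1) ^ card (N - M) * k M) * (\<Sum>P\<in>Pow (L - N). F (N \<union> P)))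
       = (\<Sum>M\<in>Pow L. k M * F M)"
proof -
  have s1: "(\<Sum>P\<in>Pow (L - N). F (N \<union> P)) = (\<Sum>Q\<in>Pow L. if N \<subseteq> Q then F Q else 0)"
    if "N \<subseteq> L" for N
  proof -
    have eq: "{Q \<in> Pow L. N \<subseteq> Q} = (\<lambda>P. N \<union> P) ` Pow (L - N)"
    proof
      show "{Q \<in> Pow L. N \<subseteq> Q} \<subseteq> (\<lambda>P. N \<union> P) ` Pow (L - N)"
      proof
        fix Q assume "Q \<in> {Q \<in> Pow L. N \<subseteq> Q}"
        then have "Q = N \<union> (Q - N)" "Q - N \<in> Pow (L - N)" by auto
        then show "Q \<in> (\<lambda>P. N \<union> P) ` Pow (L - N)" by blast
      qed
    qed (use that in auto)
    have inj: "inj_on (\<lambda>P. N \<union> P) (Pow (L - N))"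
      unfolding inj_on_def by blast
    have "(\<Sum>Q\<in>Pow L. if N \<subseteq> Q then F Q else 0) = (\<Sum>Q\<in>{Q \<in> Pow L. N \<subseteq> Q}. F Q)"
      using sum.inter_filter[of "Pow L" F "\<lambda>Q. N \<subseteq> Q"] L by simp
    also have "\<dots> = (\<Sum>P\<in>Pow (L - N). F (N \<union> P))"
      unfolding eq by (simp add: sum.reindex[OF inj])
    finally show ?thesis by simp
  qed
  have s2: "(\<Sum>M\<in>Pow N. (-1) ^ card (N - M) * k M) = (\<Sum>M\<in>Pow L. if M \<subseteq> N then (-1) ^ card (N - M) * k M else 0)"
    if "N \<subseteq> L" for N
  proof -
    have "Pow N = {M \<in> Pow L. M \<subseteq> N}" using that by auto
    then show ?thesis using sum.inter_filter[of "Pow L" "\<lambda>M. (-1) ^ card (N - M) * k M" "\<lambda>M. M \<subseteq> N"] L by simp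
  qed
  have "(\<Sum>N\<in>Pow L. (\<Sum>M\<in>Pow N. (-1) ^ card (N - M) * k M) * (\<Sum>P\<in>Pow (L - N). F (N \<union> P)))
      = (\<Sum>N\<in>Pow L. (\<Sum>M\<in>Pow L. if M \<subseteq> N then (-1) ^ card (N - M) * k M else 0) * (\<Sum>Q\<in>Pow L. if N \<subseteq> Q then F Q else 0))"
    by (rule sum.cong[OF refl]) (simp add: s1 s2)
  also have "\<dots> = (\<Sum>N\<in>Pow L. \<Sum>M\<in>Pow L. \<Sum>Q\<in>Pow L. if M \<subseteq> N \<and> N \<subseteq> Q then (-1) ^ card (N - M) * k M * F Q else 0)"
    by (simp only: sum_product) (intro sum.cong refl, simp)
  also have "\<dots> = (\<Sum>M\<in>Pow L. \<Sum>Q\<in>Pow L. \<Sum>N\<in>Pow L. if M \<subseteq> N \<and> N \<subseteq> Q then (-1) ^ card (N - M) * k M * F Q else 0)"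
    by (subst sum.swap) (subst (2) sum.swap, rule refl)
  also have "\<dots> = (\<Sum>M\<in>Pow L. \<Sum>Q\<in>Pow L. if M = Q then k M * F Q else 0)"
  proof (intro sum.cong refl)
    fix M Q assume M: "M \<in> Pow L" and Q: "Q \<in> Pow L"
    have "(\<Sum>N\<in>Pow L. if M \<subseteq> N \<and> N \<subseteq> Q then (-1) ^ card (N - M) * k M * F Q else 0)
        = (\<Sum>N\<in>{N \<in> Pow L. M \<subseteq> N \<and> N \<subseteq> Q}. (-1) ^ card (N - M) * k M * F Q)"
      using sum.inter_filter[of "Pow L" "\<lambda>N. (-1) ^ card (N - M) * k M * F Q" "\<lambda>N. M \<subseteq> N \<and> N \<subseteq> Q"] L
      by simp
    also have "\<dots> = (\<Sum>N\<in>{N \<in> Pow L. M \<subseteq> N \<and> N \<subseteq> Q}. (-1) ^ card (N - M)) * (k M * F Q)"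
      by (simp add: sum_distrib_right mult.assoc)
    also have "{N \<in> Pow L. M \<subseteq> N \<and> N \<subseteq> Q} = {N. M \<subseteq> N \<and> N \<subseteq> Q}" using Q by auto
    finally have eqn: "(\<Sum>N\<in>Pow L. if M \<subseteq> N \<and> N \<subseteq> Q then (-1) ^ card (N - M) * k M * F Q else 0)
        = (\<Sum>N\<in>{N. M \<subseteq> N \<and> N \<subseteq> Q}. (-1) ^ card (N - M)) * (k M * F Q)" .
    show "(\<Sum>N\<in>Pow L. if M \<subseteq> N \<and> N \<subseteq> Q then (-1) ^ card (N - M) * k M * F Q else 0)
        = (if M = Q then k M * F Q else 0)"
    proof (cases "M \<subseteq> Q")
      case True
      have "finite Q" using Q L finite_subset by auto
      with True show ?thesis using alt_interval[of Q M] eqn by simp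
    next
      case False
      then have e: "{N. M \<subseteq> N \<and> N \<subseteq> Q} = {}" by blast
      have "M \<noteq> Q" using False by auto
      then show ?thesis unfolding eqn e by simp
    qed
  qed
  also have "\<dots> = (\<Sum>M\<in>Pow L. k M * F M)"
    by (simp add: L)
  finally show ?thesis .
qed


definition phi :: "('x \<Rightarrow> complex) \<Rightarrow> ('x set \<Rightarrow> complex) \<Rightarrow> 'x set \<Rightarrow> complex" where
  "phi z W Y = (\<Prod>y\<in>Y. z y) * kappa W Y {}"

fun aseq :: "('x \<Rightarrow> complex) \<Rightarrow> ('x set \<Rightarrow> complex) \<Rightarrow> 'x set \<Rightarrow> nat \<Rightarrow> nat \<Rightarrow> complex" where
  "aseq z W L 0 k = (if k = 0 then 1 else 0)"
| "aseq z W L (Suc n) 0 = 1 - (\<Sum>Y\<in>Pow L - {{}}. phi z W Y * aseq z W L n (card Y - 1))"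
| "aseq z W L (Suc n) (Suc k) = aseq z W L n k"

lemma kappa_single_in: "x \<in> B \<Longrightarrow> kappa W {x} B = 0"
proof -
  assume "x \<in> B"
  have "Pow {x} - {{}} = {{x}}" by auto
  then show ?thesis using \<open>x \<in> B\<close> by (auto simp: kappa_def Wc_def)
qed

lemma kappa_single_notin: "x \<notin> B \<Longrightarrow> kappa W {x} B = (\<Prod>C\<in>Pow B. W (insert x C))"
proof -
  assume "x \<notin> B"
  have "Pow {x} - {{}} = {{x}}" by auto
  then show ?thesis using \<open>x \<notin> B\<close> by (auto simp: kappa_def Wc_def)
qed

lemma kappa_empty_cond: "kappa W Y {} = (\<Prod>S\<in>Pow Y - {{}}. W S)"
  by (simp add: kappa_def Wc_def)

lemma phi_empty: "phi z W {} = 1"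
proof -
  have "Pow {} - {{}} = ({} :: 'a set set)" by auto
  then show ?thesis by (simp add: phi_def kappa_empty_cond)
qed

lemma phi_insert:
  assumes "finite B" "x \<notin> B"
  shows "z x * kappa W {x} B * phi z W B = phi z W (insert x B)"
proof -
  have inj: "inj_on (insert x) (Pow B)" using assms(2)
    unfolding inj_on_def by (metis PowD insert_ident subsetD)
  have split: "Pow (insert x B) - {{}} = (Pow B - {{}}) \<union> insert x ` Pow B" by (auto simp: Pow_insert)
  have "kappa W (insert x B) {} = (\<Prod>S\<in>Pow B - {{}}. W S) * (\<Prod>S\<in>insert x ` Pow B. W S)"
    unfolding kappa_empty_cond split
    by (rule prod.union_disjoint) (use assms in auto)
  also have "(\<Prod>S\<in>insert x ` Pow B. W S) = (\<Prod>C\<in>Pow B. W (insert x C))"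
    by (simp add: prod.reindex[OF inj])
  finally have k: "kappa W (insert x B) {} = kappa W B {} * kappa W {x} B"
    using assms by (simp add: kappa_single_notin kappa_empty_cond)
  show ?thesis using assms unfolding phi_def k by (simp add: ac_simps)
qed

lemma rho_Suc: "rho_seq z W s L (Suc n) = KS z W s L (rho_seq z W s L n)"
  by (simp add: rho_seq_def)

lemma rho_empty: "rho_seq z W s L n {} = 1"
  by (induction n) (simp_all add: rho_Suc KS_def, simp add: rho_seq_def)

lemma rep_base:
  assumes "finite L" "finite X"
  shows "rho_seq z W s L 0 X = (\<Sum>N\<in>Pow (L - X). phi z W (X \<union> N) * aseq z W L 0 (card (X \<union> N)))"
proof (cases "X = {}")
  case True
  have "(\<Sum>N\<in>Pow L. phi z W N * aseq z W L 0 (card N))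
      = phi z W {} * aseq z W L 0 (card {}) + (\<Sum>N\<in>Pow L - {{}}. phi z W N * aseq z W L 0 (card N))"
    using sum.remove[of "Pow L" "{}" "\<lambda>N. phi z W N * aseq z W L 0 (card N)"] assms by simp
  also have "(\<Sum>N\<in>Pow L - {{}}. phi z W N * aseq z W L 0 (card N)) = 0"
  proof (rule sum.neutral, rule ballI)
    fix N assume "N \<in> Pow L - {{}}"
    then have "finite N" "N \<noteq> {}" using assms finite_subset by auto
    then show "phi z W N * aseq z W L 0 (card N) = 0" by simp
  qed
  finally show ?thesis using True by (simp add: rho_seq_def phi_empty)
next
  case False
  have "(\<Sum>N\<in>Pow (L - X). phi z W (X \<union> N) * aseq z W L 0 (card (X \<union> N))) = 0"
  proof (rule sum.neutral, rule ballI)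
    fix N assume "N \<in> Pow (L - X)"
    then have "finite (X \<union> N)" "X \<union> N \<noteq> {}" using assms False finite_subset by auto
    then show "phi z W (X \<union> N) * aseq z W L 0 (card (X \<union> N)) = 0" by auto
  qed
  then show ?thesis using False by (simp add: rho_seq_def)
qed

lemma rep:
  assumes L: "finite L" and s: "selector s"
  shows "finite X \<Longrightarrow> rho_seq z W s L n X = (\<Sum>N\<in>Pow (L - X). phi z W (X \<union> N) * aseq z W L n (card (X \<union> N)))"
proof (induction n arbitrary: X)
  case 0
  then show ?case using rep_base L by blast
next
  case (Suc n)
  note IH = Suc.IH
  show ?case
  proof (cases "X = {}")
    case True
    have "(\<Sum>N\<in>Pow L. phi z W N * aseq z W L (Suc n) (card N))
        = phi z W {} * aseq z W L (Suc n) (card {}) + (\<Sum>N\<in>Pow L - {{}}. phi z W N * aseq z W L (Suc n) (card N))"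
      using sum.remove[of "Pow L" "{}" "\<lambda>N. phi z W N * aseq z W L (Suc n) (card N)"] L by simp
    also have "(\<Sum>N\<in>Pow L - {{}}. phi z W N * aseq z W L (Suc n) (card N))
        = (\<Sum>N\<in>Pow L - {{}}. phi z W N * aseq z W L n (card N - 1))"
    proof (rule sum.cong[OF refl])
      fix N assume "N \<in> Pow L - {{}}"
      then have "card N = Suc (card N - 1)" using L finite_subset
        by (metis DiffE PowD card_0_eq not0_implies_Suc singletonI diff_Suc_1)
      then show "phi z W N * aseq z W L (Suc n) (card N) = phi z W N * aseq z W L n (card N - 1)"
        by (metis aseq.simps(3))
    qed
    finally show ?thesis using True by (simp add: rho_empty phi_empty)
  next
    case False
    define x where "x = s X"
    define X' where "X' = X - {x}"
    have xX: "x \<in> X" using s Suc.prems False by (simp add: selector_def x_def)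
    have fX': "finite X'" using Suc.prems by (simp add: X'_def)
    have xX': "x \<notin> X'" by (simp add: X'_def)
    define LL where "LL = L - X'"
    have fLL: "finite LL" using L by (simp add: LL_def)
    define k where "k = (\<lambda>M. kappa W {x} (X' \<union> M))"
    define F where "F = (\<lambda>Q. phi z W (X' \<union> Q) * aseq z W L n (card (X' \<union> Q)))"
    have KSX: "rho_seq z W s L (Suc n) X = (\<Sum>N\<in>Pow LL. z x * gam W x N X' * rho_seq z W s L n (X' \<union> N))"
      using False by (simp add: rho_Suc KS_def Let_def x_def X'_def LL_def)
    also have "\<dots> = (\<Sum>N\<in>Pow LL. z x * ((\<Sum>M\<in>Pow N. (-1) ^ card (N - M) * k M) * (\<Sum>P\<in>Pow (LL - N). F (N \<union> P))))"
    proof (rule sum.cong[OF refl])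
      fix N assume N: "N \<in> Pow LL"
      have fin: "finite (X' \<union> N)" using fX' N fLL finite_subset by auto
      have "L - (X' \<union> N) = LL - N" by (auto simp: LL_def)
      then have "rho_seq z W s L n (X' \<union> N) = (\<Sum>P\<in>Pow (LL - N). F (N \<union> P))"
        using IH[OF fin] by (simp add: F_def Un_assoc)
      then show "z x * gam W x N X' * rho_seq z W s L n (X' \<union> N)
          = z x * ((\<Sum>M\<in>Pow N. (-1) ^ card (N - M) * k M) * (\<Sum>P\<in>Pow (LL - N). F (N \<union> P)))"
        by (simp add: gam_def k_def)
    qed
    also have "\<dots> = z x * (\<Sum>N\<in>Pow LL. (\<Sum>M\<in>Pow N. (-1) ^ card (N - M) * k M) * (\<Sum>P\<in>Pow (LL - N). F (N \<union> P)))"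
      by (rule sum_distrib_left[symmetric])
    also have "\<dots> = z x * (\<Sum>M\<in>Pow LL. k M * F M)"
      by (simp only: mobius_key[OF fLL])
    also have "\<dots> = (\<Sum>M\<in>Pow LL. z x * k M * F M)"
      by (simp add: sum_distrib_left mult.assoc)
    also have "\<dots> = (\<Sum>M\<in>Pow (L - X). z x * k M * F M)"
    proof (rule sum.mono_neutral_right)
      show "finite (Pow LL)" using fLL by simp
      show "Pow (L - X) \<subseteq> Pow LL" by (auto simp: LL_def X'_def)
      show "\<forall>M\<in>Pow LL - Pow (L - X). z x * k M * F M = 0"
      proof
        fix M assume "M \<in> Pow LL - Pow (L - X)"
        then have "x \<in> M" by (auto simp: LL_def X'_def)
        then show "z x * k M * F M = 0" by (simp add: k_def kappa_single_in)
      qed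
    qed
    also have "\<dots> = (\<Sum>N\<in>Pow (L - X). phi z W (X \<union> N) * aseq z W L (Suc n) (card (X \<union> N)))"
    proof (rule sum.cong[OF refl])
      fix M assume M: "M \<in> Pow (L - X)"
      have fin: "finite (X' \<union> M)" using fX' M L finite_subset by auto
      have xn: "x \<notin> X' \<union> M" using M xX xX' by auto
      have eq: "X \<union> M = insert x (X' \<union> M)" using xX by (auto simp: X'_def)
      have c: "card (X \<union> M) = Suc (card (X' \<union> M))" unfolding eq using fin xn by simp
      show "z x * k M * F M = phi z W (X \<union> M) * aseq z W L (Suc n) (card (X \<union> M))"
        unfolding c F_def k_def using phi_insert[OF fin xn, of z W, symmetric] eq
        by (simp add: mult.assoc)
    qed
    finally show ?thesis .
  qed
qed

theorem lemma6p2: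
  fixes z :: "'x::countable \<Rightarrow> complex" and W :: "'x set \<Rightarrow> complex"
    and \<Lambda> :: "'x set" and s t :: "'x set \<Rightarrow> 'x"
  assumes "finite \<Lambda>" and "selector s" and "selector t"
  shows "(\<forall>n X. finite X \<longrightarrow> rho_seq z W s \<Lambda> n X = rho_seq z W t \<Lambda> n X)
         \<and> (\<forall>n. rho_seq z W s \<Lambda> n {} = 1)"
proof (intro conjI allI impI)
  fix n X assume "finite (X :: 'x set)"
  then show "rho_seq z W s \<Lambda> n X = rho_seq z W t \<Lambda> n X"
    using rep[OF assms(1,2)] rep[OF assms(1,3)] by simp
next
  fix n show "rho_seq z W s \<Lambda> n {} = 1" by (rule rho_empty)
qed

end
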